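(* The logic ${\rm Linc}^-$ is consistent: for any fixed definition $\mathcal{D}$ and any formula $C$, it is not the case that both sequents $\vdash C$ and $\vdash C\supset\bot$ are derivable in ${\rm Linc}^-$.
   Context: Terms are simply typed $\lambda$-terms (with $\beta$ and $\eta$) over base types, including a distinguished type $o$ of formulae. A type is essentially first-order (efo) if generated by $\tau ::= k \mid \tau\to\tau$ with $k$ a base type other than $o$. To each predicate constant $p$ is associated a countably infinite set $\mathcal{P}_p$ of parameters $X^p$ of the same type as $p$. Formulae are $\beta\eta$-long normal terms of type $o$ given by $F ::= X^p\,\vec t \mid s =_\tau t \mid p\,\vec t \mid \bot\mid\top\mid F\land F\mid F\lor F\mid F\supset F\mid \forall_\tau x.F\mid\exists_\tau x.F$, with $\tau$ efo. A definition is a finite set of clauses $\forall\vec x.\,p\,\vec x \stackrel{\mu}{=} B\,p\,\vec x$ (inductive) or $\forall\vec x.\,p\,\vec x \stackrel{\nu}{=} B\,p\,\vec x$ (co-inductive), where $B$ is a closed term with no parameters and no free $p$; each predicate heads at most one clause, and clauses are non-mutually recursive. Sequents $\Gamma\vdash C$ have $\Gamma$ a multiset. Rules of ${\rm Linc}^-$: $init$ ($C\vdash C$); contraction and weakening on the left; multicut $mc$ (from $\Delta_i\vdash B_i$, $i=1..n$, $n>0$, and $B_1,\dots,B_n,\Gamma\vdash C$ infer $\Delta_1,\dots,\Delta_n,\Gamma\vdash C$); $\bot\mathcal{L}$, $\top\mathcal{R}$; standard intuitionistic left/right rules for $\land,\lor,\supset,\forall,\exists$ (eigenvariables fresh in $\forall\mathcal{R},\exists\mathcal{L}$;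 arbitrary terms, possibly with new eigenvariables, in $\forall\mathcal{L},\exists\mathcal{R}$); ${\rm eq}\mathcal{R}$: $\Gamma\vdash t=t$; ${\rm eq}\mathcal{L}$: from $\{\Gamma\rho\vdash C\rho\mid s\rho=_{\beta\eta}t\rho\}$ infer $s=t,\Gamma\vdash C$; for $p\,\vec x\stackrel{\mu}{=}B\,p\,\vec x$: ${\rm I}\mathcal{L}$ (from $B\,S\,\vec y\vdash S\,\vec y$ and $\Gamma,S\,\vec t\vdash C$ infer $\Gamma,p\,\vec t\vdash C$, $\vec y$ new), ${\rm I}\mathcal{R}$ (from $\Gamma\vdash B\,X^p\,\vec t$ infer $\Gamma\vdash p\,\vec t$, $X^p$ new), ${\rm I}\mathcal{R}_p$ (from $\Gamma\vdash B\,X^p\,\vec t$ infer $\Gamma\vdash X^p\,\vec t$); for $p\,\vec x\stackrel{\nu}{=}B\,p\,\vec x$: ${\rm CI}\mathcal{L}$ (from $B\,X^p\,\vec t,\Gamma\vdash C$ infer $p\,\vec t,\Gamma\vdash C$, $X^p$ new), ${\rm CI}\mathcal{L}_p$ (from $B\,X^p\,\vec t,\Gamma\vdash C$ infer $X^p\,\vec t,\Gamma\vdash C$), ${\rm CI}\mathcal{R}$ (from $\Gamma\vdash S\,\vec t$ and $S\,\vec y\vdash B\,S\,\vec y$ infer $\Gamma\vdash p\,\vec t$, $\vec y$ new). *)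

theory Defs
  imports Main "HOL-Library.Multiset"
begin

text \<open>Base types are Base n; TyO is the distinguished type o of formulae.\<close>
datatype ty = Base nat | TyO | Arr ty ty

fun efo :: "ty \<Rightarrow> bool" where
  "efo (Base n) = True"
| "efo TyO = False"
| "efo (Arr a b) = (efo a \<and> efo b)"

text \<open>Bv: bound variable (de Bruijn index); Fv n T: eigenvariable n of type T;
  Cn n T: function constant n of type T.\<close>
datatype trm = Bv nat | Fv nat ty | Cn nat ty | Lam ty trm | App trm trm

fun lift :: "nat \<Rightarrow> trm \<Rightarrow> trm" where
  "lift k (Bv i) = (if i < k then Bv i else Bv (Suc i))"
| "lift k (Fv n T) = Fv n T"
| "lift k (Cn n T) = Cn n T"
| "lift k (Lam T t) = Lam T (lift (Suc k) t)"
| "lift k (App s t) = App (lift k s) (lift k t)"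

fun liftn :: "nat \<Rightarrow> trm \<Rightarrow> trm" where
  "liftn 0 t = t"
| "liftn (Suc m) t = lift 0 (liftn m t)"

fun substt :: "trm \<Rightarrow> nat \<Rightarrow> trm \<Rightarrow> trm" where
  "substt (Bv i) k u = (if i < k then Bv i else if i = k then u else Bv (i - 1))"
| "substt (Fv n T) k u = Fv n T"
| "substt (Cn n T) k u = Cn n T"
| "substt (Lam T t) k u = Lam T (substt t (Suc k) (lift 0 u))"
| "substt (App s t) k u = App (substt s k u) (substt t k u)"

inductive hastype :: "ty list \<Rightarrow> trm \<Rightarrow> ty \<Rightarrow> bool" where
  "i < length G \<Longrightarrow> efo (G ! i) \<Longrightarrow> hastype G (Bv i) (G ! i)"
| "efo T \<Longrightarrow> hastype G (Fv n T) T"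
| "efo T \<Longrightarrow> hastype G (Cn n T) T"
| "efo T \<Longrightarrow> hastype (T # G) t U \<Longrightarrow> hastype G (Lam T t) (Arr T U)"
| "hastype G s (Arr T U) \<Longrightarrow> hastype G t T \<Longrightarrow> hastype G (App s t) U"

inductive conv :: "trm \<Rightarrow> trm \<Rightarrow> bool" where
  conv_refl: "conv t t"
| conv_sym: "conv s t \<Longrightarrow> conv t s"
| conv_trans: "conv s t \<Longrightarrow> conv t u \<Longrightarrow> conv s u"
| conv_app: "conv s s' \<Longrightarrow> conv t t' \<Longrightarrow> conv (App s t) (App s' t')"
| conv_lam: "conv s s' \<Longrightarrow> conv (Lam T s) (Lam T s')"
| conv_beta: "conv (App (Lam T s) t) (substt s 0 t)"
| conv_eta: "conv (Lam T (App (lift 0 s) (Bv 0))) s"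

text \<open>eigenvariable substitution (images are closed w.r.t. bound variables)\<close>
fun esub :: "(nat \<Rightarrow> ty \<Rightarrow> trm) \<Rightarrow> trm \<Rightarrow> trm" where
  "esub \<rho> (Bv i) = Bv i"
| "esub \<rho> (Fv n T) = \<rho> n T"
| "esub \<rho> (Cn n T) = Cn n T"
| "esub \<rho> (Lam T t) = Lam T (esub \<rho> t)"
| "esub \<rho> (App s t) = App (esub \<rho> s) (esub \<rho> t)"

definition wf_esub :: "(nat \<Rightarrow> ty \<Rightarrow> trm) \<Rightarrow> bool" where
  "wf_esub \<rho> \<longleftrightarrow> (\<forall>n T. efo T \<longrightarrow> hastype [] (\<rho> n T) T)"

fun fvt :: "trm \<Rightarrow> (nat \<times> ty) set" where
  "fvt (Bv i) = {}"
| "fvt (Fv n T) = {(n, T)}"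
| "fvt (Cn n T) = {}"
| "fvt (Lam T t) = fvt t"
| "fvt (App s t) = fvt s \<union> fvt t"

text \<open>A predicate constant carries its name and its argument types (so p has type
  T1 -> ... -> Tn -> o).  Par p i ts is the parameter X^p_i applied to ts (the set
  of parameters of p is indexed by nat).  PV ts is the bound predicate variable
  occurring in the body of a definitional clause (never in sequents).\<close>
type_synonym pred = "nat \<times> ty list"

datatype fm =
    Par pred nat "trm list"
  | Eq ty trm trm
  | Atm pred "trm list"
  | Bot | Top
  | Conj fm fm | Disj fm fm | Imp fm fm
  | All ty fm | Ex ty fm
  | PV "trm list"

fun substf :: "fm \<Rightarrow> nat \<Rightarrow> trm \<Rightarrow> fm" where
  "substf (Par p i ts) k u = Par p i (map (\<lambda>t. substt t k u) ts)"
| "substf (Eq T s t) k u = Eq T (substt s k u) (substt t k u)"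
| "substf (Atm p ts) k u = Atm p (map (\<lambda>t. substt t k u) ts)"
| "substf Bot k u = Bot"
| "substf Top k u = Top"
| "substf (Conj A B) k u = Conj (substf A k u) (substf B k u)"
| "substf (Disj A B) k u = Disj (substf A k u) (substf B k u)"
| "substf (Imp A B) k u = Imp (substf A k u) (substf B k u)"
| "substf (All T A) k u = All T (substf A (Suc k) (lift 0 u))"
| "substf (Ex T A) k u = Ex T (substf A (Suc k) (lift 0 u))"
| "substf (PV ts) k u = PV (map (\<lambda>t. substt t k u) ts)"

text \<open>instf F [t1,...,tn]: F is the body of a lambda abstraction over x1..xn
  (xn is bound index 0); returns the beta-reduct (up to term normalisation).\<close>
fun instf :: "fm \<Rightarrow> trm list \<Rightarrow> fm" where
  "instf F [] = F"
| "instf F (t # ts) = instf (substf F (length ts) (liftn (length ts) t)) ts"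

fun replPV :: "(trm list \<Rightarrow> fm) \<Rightarrow> fm \<Rightarrow> fm" where
  "replPV S (PV ts) = S ts"
| "replPV S (Conj A B) = Conj (replPV S A) (replPV S B)"
| "replPV S (Disj A B) = Disj (replPV S A) (replPV S B)"
| "replPV S (Imp A B) = Imp (replPV S A) (replPV S B)"
| "replPV S (All T A) = All T (replPV S A)"
| "replPV S (Ex T A) = Ex T (replPV S A)"
| "replPV S F = F"

fun esubf :: "(nat \<Rightarrow> ty \<Rightarrow> trm) \<Rightarrow> fm \<Rightarrow> fm" where
  "esubf \<rho> (Par p i ts) = Par p i (map (esub \<rho>) ts)"
| "esubf \<rho> (Eq T s t) = Eq T (esub \<rho> s) (esub \<rho> t)"
| "esubf \<rho> (Atm p ts) = Atm p (map (esub \<rho>) ts)"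
| "esubf \<rho> Bot = Bot"
| "esubf \<rho> Top = Top"
| "esubf \<rho> (Conj A B) = Conj (esubf \<rho> A) (esubf \<rho> B)"
| "esubf \<rho> (Disj A B) = Disj (esubf \<rho> A) (esubf \<rho> B)"
| "esubf \<rho> (Imp A B) = Imp (esubf \<rho> A) (esubf \<rho> B)"
| "esubf \<rho> (All T A) = All T (esubf \<rho> A)"
| "esubf \<rho> (Ex T A) = Ex T (esubf \<rho> A)"
| "esubf \<rho> (PV ts) = PV (map (esub \<rho>) ts)"

fun fvf :: "fm \<Rightarrow> (nat \<times> ty) set" where
  "fvf (Par p i ts) = \<Union>(fvt ` set ts)"
| "fvf (Eq T s t) = fvt s \<union> fvt t"
| "fvf (Atm p ts) = \<Union>(fvt ` set ts)"
| "fvf Bot = {}"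
| "fvf Top = {}"
| "fvf (Conj A B) = fvf A \<union> fvf B"
| "fvf (Disj A B) = fvf A \<union> fvf B"
| "fvf (Imp A B) = fvf A \<union> fvf B"
| "fvf (All T A) = fvf A"
| "fvf (Ex T A) = fvf A"
| "fvf (PV ts) = \<Union>(fvt ` set ts)"

fun parsf :: "fm \<Rightarrow> (pred \<times> nat) set" where
  "parsf (Par p i ts) = {(p, i)}"
| "parsf (Conj A B) = parsf A \<union> parsf B"
| "parsf (Disj A B) = parsf A \<union> parsf B"
| "parsf (Imp A B) = parsf A \<union> parsf B"
| "parsf (All T A) = parsf A"
| "parsf (Ex T A) = parsf A"
| "parsf _ = {}"

fun predsf :: "fm \<Rightarrow> pred set" where
  "predsf (Atm p ts) = {p}"
| "predsf (Conj A B) = predsf A \<union> predsf B"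
| "predsf (Disj A B) = predsf A \<union> predsf B"
| "predsf (Imp A B) = predsf A \<union> predsf B"
| "predsf (All T A) = predsf A"
| "predsf (Ex T A) = predsf A"
| "predsf _ = {}"

text \<open>Well-formedness: wff P G F, G the types of the bound variables, P the argument
  types of the predicate variable (None: no predicate variable allowed).\<close>
fun wff :: "ty list option \<Rightarrow> ty list \<Rightarrow> fm \<Rightarrow> bool" where
  "wff P G (Par p i ts) = (list_all efo (snd p) \<and> list_all2 (hastype G) ts (snd p))"
| "wff P G (Eq T s t) = (efo T \<and> hastype G s T \<and> hastype G t T)"
| "wff P G (Atm p ts) = (list_all efo (snd p) \<and> list_all2 (hastype G) ts (snd p))"
| "wff P G Bot = True"
| "wff P G Top = True"
| "wff P G (Conj A B) = (wff P G A \<and> wff P G B)"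
| "wff P G (Disj A B) = (wff P G A \<and> wff P G B)"
| "wff P G (Imp A B) = (wff P G A \<and> wff P G B)"
| "wff P G (All T A) = (efo T \<and> wff P (T # G) A)"
| "wff P G (Ex T A) = (efo T \<and> wff P (T # G) A)"
| "wff P G (PV ts) = (case P of None \<Rightarrow> False | Some Ts \<Rightarrow> list_all2 (hastype G) ts Ts)"

text \<open>formulae identified up to beta-eta conversion of their terms
  (formulae of the paper are beta-eta-long normal forms)\<close>
primrec feq :: "fm \<Rightarrow> fm \<Rightarrow> bool" where
  "feq (Par p i ts) G = (case G of Par q j us \<Rightarrow> p = q \<and> i = j \<and> list_all2 conv ts us | _ \<Rightarrow> False)"
| "feq (Eq T s t) G = (case G of Eq U s' t' \<Rightarrow> T = U \<and> conv s s' \<and> conv t t' | _ \<Rightarrow> False)"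
| "feq (Atm p ts) G = (case G of Atm q us \<Rightarrow> p = q \<and> list_all2 conv ts us | _ \<Rightarrow> False)"
| "feq Bot G = (G = Bot)"
| "feq Top G = (G = Top)"
| "feq (Conj A B) G = (case G of Conj A' B' \<Rightarrow> feq A A' \<and> feq B B' | _ \<Rightarrow> False)"
| "feq (Disj A B) G = (case G of Disj A' B' \<Rightarrow> feq A A' \<and> feq B B' | _ \<Rightarrow> False)"
| "feq (Imp A B) G = (case G of Imp A' B' \<Rightarrow> feq A A' \<and> feq B B' | _ \<Rightarrow> False)"
| "feq (All T A) G = (case G of All U A' \<Rightarrow> T = U \<and> feq A A' | _ \<Rightarrow> False)"
| "feq (Ex T A) G = (case G of Ex U A' \<Rightarrow> T = U \<and> feq A A' | _ \<Rightarrow> False)"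
| "feq (PV ts) G = (case G of PV us \<Rightarrow> list_all2 conv ts us | _ \<Rightarrow> False)"

datatype kind = Mu | Nu

text \<open>A definition maps a predicate p (of argument types Ts) to its unique clause,
  given by its kind and the body B (a formula over the argument variables x1..xn,
  with xn bound index 0, and the predicate variable PV standing for the bound p).\<close>
type_synonym defn = "pred \<Rightarrow> (kind \<times> fm) option"

definition wf_defn :: "defn \<Rightarrow> bool" where
  "wf_defn D \<longleftrightarrow>
     finite (dom D) \<and>
     acyclic {(p, q). \<exists>k b. D p = Some (k, b) \<and> q \<in> predsf b} \<and>
     (\<forall>p k b. D p = Some (k, b) \<longrightarrow>
        list_all efo (snd p) \<and> wff (Some (snd p)) (rev (snd p)) b \<and>
        parsf b = {} \<and> fvf b = {})"

text \<open>An invariant S for predicate p: a closed term of p's type, i.e. lambda x1..xn. g\<close>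
definition wf_inv :: "pred \<Rightarrow> fm \<Rightarrow> bool" where
  "wf_inv p g \<longleftrightarrow> wff None (rev (snd p)) g \<and> fvf g = {}"

definition unfold :: "fm \<Rightarrow> (trm list \<Rightarrow> fm) \<Rightarrow> trm list \<Rightarrow> fm" where
  "unfold b S ts = instf (replPV S b) ts"

definition wfseq :: "fm multiset \<Rightarrow> fm \<Rightarrow> bool" where
  "wfseq G C \<longleftrightarrow> (\<forall>F\<in>#G. wff None [] F) \<and> wff None [] C"

definition fvs :: "fm multiset \<Rightarrow> (nat \<times> ty) set" where
  "fvs G = \<Union>(fvf ` set_mset G)"

definition pars :: "fm multiset \<Rightarrow> (pred \<times> nat) set" where
  "pars G = \<Union>(parsf ` set_mset G)"

definition eigvars :: "nat list \<Rightarrow> ty list \<Rightarrow> trm list" where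
  "eigvars ys Ts = map2 Fv ys Ts"

inductive deriv :: "defn \<Rightarrow> fm multiset \<Rightarrow> fm \<Rightarrow> bool" for D where
  conversion: "deriv D G C \<Longrightarrow> rel_mset feq G G' \<Longrightarrow> feq C C' \<Longrightarrow> wfseq G' C'
     \<Longrightarrow> deriv D G' C'"
| init: "wfseq {#C#} C \<Longrightarrow> deriv D {#C#} C"
| contrL: "deriv D (G + {#B, B#}) C \<Longrightarrow> deriv D (G + {#B#}) C"
| weakL: "deriv D G C \<Longrightarrow> wfseq (G + {#B#}) C \<Longrightarrow> deriv D (G + {#B#}) C"
| mc: "xs \<noteq> [] \<Longrightarrow> (\<forall>x\<in>set xs. deriv D (fst x) (snd x))
     \<Longrightarrow> deriv D (mset (map snd xs) + G) C
     \<Longrightarrow> deriv D (sum_list (map fst xs) + G) C"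
| botL: "wfseq (G + {#Bot#}) C \<Longrightarrow> deriv D (G + {#Bot#}) C"
| topR: "wfseq G Top \<Longrightarrow> deriv D G Top"
| conjL1: "deriv D (G + {#A#}) C \<Longrightarrow> wfseq (G + {#Conj A B#}) C \<Longrightarrow> deriv D (G + {#Conj A B#}) C"
| conjL2: "deriv D (G + {#B#}) C \<Longrightarrow> wfseq (G + {#Conj A B#}) C \<Longrightarrow> deriv D (G + {#Conj A B#}) C"
| conjR: "deriv D G A \<Longrightarrow> deriv D G B \<Longrightarrow> deriv D G (Conj A B)"
| disjL: "deriv D (G + {#A#}) C \<Longrightarrow> deriv D (G + {#B#}) C \<Longrightarrow> deriv D (G + {#Disj A B#}) C"
| disjR1: "deriv D G A \<Longrightarrow> wfseq G (Disj A B) \<Longrightarrow> deriv D G (Disj A B)"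
| disjR2: "deriv D G B \<Longrightarrow> wfseq G (Disj A B) \<Longrightarrow> deriv D G (Disj A B)"
| impL: "deriv D G A \<Longrightarrow> deriv D (G + {#B#}) C \<Longrightarrow> deriv D (G + {#Imp A B#}) C"
| impR: "deriv D (G + {#A#}) B \<Longrightarrow> deriv D G (Imp A B)"
| allL: "deriv D (G + {#substf A 0 t#}) C \<Longrightarrow> hastype [] t T \<Longrightarrow> wfseq (G + {#All T A#}) C
     \<Longrightarrow> deriv D (G + {#All T A#}) C"
| allR: "deriv D G (substf A 0 (Fv y T)) \<Longrightarrow> (y, T) \<notin> fvs G \<union> fvf A \<Longrightarrow> wfseq G (All T A)
     \<Longrightarrow> deriv D G (All T A)"
| exL: "deriv D (G + {#substf A 0 (Fv y T)#}) C \<Longrightarrow> (y, T) \<notin> fvs G \<union> fvf A \<union> fvf C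
     \<Longrightarrow> wfseq (G + {#Ex T A#}) C \<Longrightarrow> deriv D (G + {#Ex T A#}) C"
| exR: "deriv D G (substf A 0 t) \<Longrightarrow> hastype [] t T \<Longrightarrow> wfseq G (Ex T A) \<Longrightarrow> deriv D G (Ex T A)"
| eqR: "wfseq G (Eq T t t) \<Longrightarrow> deriv D G (Eq T t t)"
| eqL: "(\<forall>\<rho>. wf_esub \<rho> \<longrightarrow> conv (esub \<rho> s) (esub \<rho> t) \<longrightarrow>
          deriv D (image_mset (esubf \<rho>) G) (esubf \<rho> C))
     \<Longrightarrow> wfseq (G + {#Eq T s t#}) C \<Longrightarrow> deriv D (G + {#Eq T s t#}) C"
| IL: "D p = Some (Mu, b) \<Longrightarrow> wf_inv p S \<Longrightarrow> distinct ys \<Longrightarrow> length ys = length (snd p)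
     \<Longrightarrow> deriv D {# unfold b (instf S) (eigvars ys (snd p)) #} (instf S (eigvars ys (snd p)))
     \<Longrightarrow> deriv D (G + {#instf S ts#}) C
     \<Longrightarrow> wfseq (G + {#Atm p ts#}) C
     \<Longrightarrow> deriv D (G + {#Atm p ts#}) C"
| IR: "D p = Some (Mu, b) \<Longrightarrow> (p, i) \<notin> pars G
     \<Longrightarrow> deriv D G (unfold b (Par p i) ts) \<Longrightarrow> wfseq G (Atm p ts)
     \<Longrightarrow> deriv D G (Atm p ts)"
| IRp: "D p = Some (Mu, b)
     \<Longrightarrow> deriv D G (unfold b (Par p i) ts) \<Longrightarrow> wfseq G (Par p i ts)
     \<Longrightarrow> deriv D G (Par p i ts)"
| CIL: "D p = Some (Nu, b) \<Longrightarrow> (p, i) \<notin> pars G \<union> parsf C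
     \<Longrightarrow> deriv D (G + {#unfold b (Par p i) ts#}) C \<Longrightarrow> wfseq (G + {#Atm p ts#}) C
     \<Longrightarrow> deriv D (G + {#Atm p ts#}) C"
| CILp: "D p = Some (Nu, b)
     \<Longrightarrow> deriv D (G + {#unfold b (Par p i) ts#}) C \<Longrightarrow> wfseq (G + {#Par p i ts#}) C
     \<Longrightarrow> deriv D (G + {#Par p i ts#}) C"
| CIR: "D p = Some (Nu, b) \<Longrightarrow> wf_inv p S \<Longrightarrow> distinct ys \<Longrightarrow> length ys = length (snd p)
     \<Longrightarrow> deriv D G (instf S ts)
     \<Longrightarrow> deriv D {#instf S (eigvars ys (snd p))#} (unfold b (instf S) (eigvars ys (snd p)))
     \<Longrightarrow> wfseq G (Atm p ts)
     \<Longrightarrow> deriv D G (Atm p ts)"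

end

theory Submission
  imports Defs
begin

fun den :: "(nat \<Rightarrow> ty \<Rightarrow> trm) \<Rightarrow> (nat \<Rightarrow> trm) \<Rightarrow> nat \<Rightarrow> trm \<Rightarrow> trm" where
  "den v e k (Bv i) = (if i < k then Bv i else e (i - k))"
| "den v e k (Fv n T) = v n T"
| "den v e k (Cn n T) = Cn n T"
| "den v e k (Lam T t) = Lam T (den v e (Suc k) t)"
| "den v e k (App s t) = App (den v e k s) (den v e k t)"

fun lft :: "nat \<Rightarrow> nat \<Rightarrow> trm \<Rightarrow> trm" where
  "lft n k (Bv i) = (if i < k then Bv i else Bv (i + n))"
| "lft n k (Fv m T) = Fv m T"
| "lft n k (Cn m T) = Cn m T"
| "lft n k (Lam T t) = Lam T (lft n (Suc k) t)"
| "lft n k (App s t) = App (lft n k s) (lft n k t)"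

fun lb :: "trm \<Rightarrow> nat \<Rightarrow> bool" where
  "lb (Bv i) n = (i < n)"
| "lb (Fv m T) n = True"
| "lb (Cn m T) n = True"
| "lb (Lam T t) n = lb t (Suc n)"
| "lb (App s t) n = (lb s n \<and> lb t n)"

definition ins :: "nat \<Rightarrow> trm \<Rightarrow> (nat \<Rightarrow> trm) \<Rightarrow> nat \<Rightarrow> trm" where
  "ins k c e = (\<lambda>i. if i < k then e i else if i = k then c else e (i - 1))"

definition cat :: "trm list \<Rightarrow> (nat \<Rightarrow> trm) \<Rightarrow> nat \<Rightarrow> trm" where
  "cat L e = (\<lambda>i. if i < length L then L ! i else e (i - length L))"

definition econs :: "trm \<Rightarrow> (nat \<Rightarrow> trm) \<Rightarrow> nat \<Rightarrow> trm" where
  "econs u e = (\<lambda>i. case i of 0 \<Rightarrow> u | Suc j \<Rightarrow> e j)"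

lemma lift_lft: "lift k (lft n k t) = lft (Suc n) k t"
  by (induction t arbitrary: k) auto

lemma lft0: "lft 0 k t = t"
  by (induction t arbitrary: k) auto

lemma liftn_lft: "liftn n t = lft n 0 t"
  by (induction n) (auto simp: lft0 lift_lft)

lemma den_lft: "den v e (m + c) (lft (m+k) c t) = den v (\<lambda>j. e (j+k)) c t"
proof (induction t arbitrary: c)
  case (Lam T t) then show ?case using Lam[of "Suc c"] by simp
qed auto

lemma den_subst: "den v e m (substt s (m+k) (lft (m+k) 0 t)) = den v (ins k (den v (\<lambda>j. e(j+k)) 0 t) e) m s"
proof (induction s arbitrary: m)
  case (Bv i)
  show ?case using den_lft[of v e m "0" k t] by (auto simp: ins_def)
next
  case (Lam T s)
  then show ?case using Lam[of "Suc m"] by (simp add: lift_lft)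
qed auto

lemma lb_mono: "lb t n \<Longrightarrow> n \<le> m \<Longrightarrow> lb t m"
  by (induction t arbitrary: n m) auto

lemma lift_lb: "lb t n \<Longrightarrow> n \<le> k \<Longrightarrow> lift k t = t"
  by (induction t arbitrary: n k) auto

lemma substt_lb: "lb t n \<Longrightarrow> n \<le> k \<Longrightarrow> substt t k u = t"
  by (induction t arbitrary: n k u) auto

lemma den_lb: "lb t k \<Longrightarrow> den v e k t = esub v t"
  by (induction t arbitrary: k) auto

definition cenv :: "(nat \<Rightarrow> trm) \<Rightarrow> bool" where
  "cenv e \<longleftrightarrow> (\<forall>i. lb (e i) 0)"

definition cval :: "(nat \<Rightarrow> ty \<Rightarrow> trm) \<Rightarrow> bool" where
  "cval v \<longleftrightarrow> (\<forall>n T. lb (v n T) 0)"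

lemma den_lift: "cenv e \<Longrightarrow> cval v \<Longrightarrow> j \<le> k \<Longrightarrow> den v e (Suc k) (lift j s) = lift j (den v e k s)"
proof (induction s arbitrary: j k)
  case (Bv i) then show ?case by (auto simp: cenv_def intro!: lift_lb[symmetric, of _ 0])
next
  case (Fv n T) then show ?case by (auto simp: cval_def intro!: lift_lb[symmetric, of _ 0])
qed auto

lemma den_substt: "cenv e \<Longrightarrow> cval v \<Longrightarrow> j \<le> k \<Longrightarrow>
   den v e k (substt s j u) = substt (den v e (Suc k) s) j (den v e k u)"
proof (induction s arbitrary: j k u)
  case (Bv i) then show ?case by (auto simp: cenv_def intro!: substt_lb[symmetric, of _ 0])
next
  case (Fv n T) then show ?case by (auto simp: cval_def intro!: substt_lb[symmetric, of _ 0])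
next
  case (Lam T s) then show ?case by (simp add: den_lift)
qed auto

lemma conv_den: "conv s s' \<Longrightarrow> cenv e \<Longrightarrow> cval v \<Longrightarrow> conv (den v e k s) (den v e k s')"
proof (induction arbitrary: k rule: conv.induct)
  case (conv_beta T s t)
  then show ?case using den_substt[of e v 0 k s t] by (simp add: conv.conv_beta)
next
  case (conv_eta T s)
  then show ?case using den_lift[of e v 0 k s] by (simp add: conv.conv_eta)
qed (auto intro: conv.intros)

lemma esub_den: "\<forall>n T. lb (\<rho> n T) 0 \<Longrightarrow> den w e k (esub \<rho> s) = den (\<lambda>n T. esub w (\<rho> n T)) e k s"
  by (induction s arbitrary: k) (auto intro: den_lb lb_mono)

lemma esub_fvfree: "fvt c = {} \<Longrightarrow> esub w c = c"
  by (induction c) auto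

lemma den_fvfree: "\<forall>i. fvt (e i) = {} \<Longrightarrow> \<forall>n T. fvt (v n T) = {} \<Longrightarrow> fvt (den v e k s) = {}"
  by (induction s arbitrary: k) auto

lemma hastype_weak: "hastype G c T \<Longrightarrow> hastype (G @ H) c T"
proof (induction rule: hastype.induct)
  case (1 i G)
  then show ?case using hastype.intros(1)[of i "G@H"] by (simp add: nth_append)
qed (auto intro: hastype.intros)

lemma hastype_lb: "hastype G t T \<Longrightarrow> lb t (length G)"
  by (induction rule: hastype.induct) auto

lemma den_type: "hastype G' t T \<Longrightarrow> G' = H @ G \<Longrightarrow> (\<forall>i<length G. hastype [] (e i) (G!i)) \<Longrightarrow>
   (\<forall>n T. efo T \<longrightarrow> hastype [] (v n T) T) \<Longrightarrow> hastype H (den v e (length H) t) T"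
proof (induction arbitrary: H rule: hastype.induct)
  case (1 i G')
  show ?case
  proof (cases "i < length H")
    case True then show ?thesis using 1 hastype.intros(1)[of i H] by (simp add: nth_append)
  next
    case False then show ?thesis using 1 hastype_weak[of "[]" "e (i - length H)" "G ! (i - length H)" H]
      by (simp add: nth_append)
  qed
next
  case (2 T G n) then show ?case using hastype_weak[of "[]" "v n T" T H] by simp
next
  case (4 T G t U)
  then show ?case using 4(3)[of "T#H"] by (auto intro: hastype.intros)
qed (auto intro: hastype.intros)

lemma den_agree_e: "lb s (k + n) \<Longrightarrow> (\<forall>i<n. e i = e' i) \<Longrightarrow> den v e k s = den v e' k s"
  by (induction s arbitrary: k) auto

lemma den_agree_v: "(\<forall>(n,T)\<in>fvt s. v n T = v' n T) \<Longrightarrow> den v e k s = den v' e k s"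
  by (induction s arbitrary: k) auto

lemma den_conv_env: "(\<forall>i. conv (e i) (e' i)) \<Longrightarrow> conv (den v e k s) (den v e' k s)"
  by (induction s arbitrary: k) (auto intro: conv.intros)


type_synonym interp = "pred \<Rightarrow> trm list \<Rightarrow> bool"
type_synonym pinterp = "pred \<times> nat \<Rightarrow> trm list \<Rightarrow> bool"

definition qt :: "trm \<Rightarrow> ty \<Rightarrow> bool" where
  "qt u T \<longleftrightarrow> hastype [] u T \<and> fvt u = {}"

fun val :: "interp \<Rightarrow> pinterp \<Rightarrow> (trm list \<Rightarrow> bool) \<Rightarrow> (nat \<Rightarrow> ty \<Rightarrow> trm) \<Rightarrow> (nat \<Rightarrow> trm) \<Rightarrow> fm \<Rightarrow> bool" where
  "val I \<pi> X v e (Par p i ts) = \<pi> (p, i) (map (den v e 0) ts)"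
| "val I \<pi> X v e (Eq T s t) = conv (den v e 0 s) (den v e 0 t)"
| "val I \<pi> X v e (Atm p ts) = I p (map (den v e 0) ts)"
| "val I \<pi> X v e Bot = False"
| "val I \<pi> X v e Top = True"
| "val I \<pi> X v e (Conj A B) = (val I \<pi> X v e A \<and> val I \<pi> X v e B)"
| "val I \<pi> X v e (Disj A B) = (val I \<pi> X v e A \<or> val I \<pi> X v e B)"
| "val I \<pi> X v e (Imp A B) = (val I \<pi> X v e A \<longrightarrow> val I \<pi> X v e B)"
| "val I \<pi> X v e (All T A) = (\<forall>u. qt u T \<longrightarrow> val I \<pi> X v (econs u e) A)"
| "val I \<pi> X v e (Ex T A) = (\<exists>u. qt u T \<and> val I \<pi> X v (econs u e) A)"
| "val I \<pi> X v e (PV ts) = X (map (den v e 0) ts)"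

definition cinv :: "(trm list \<Rightarrow> bool) \<Rightarrow> bool" where
  "cinv X \<longleftrightarrow> (\<forall>as bs. list_all2 conv as bs \<longrightarrow> X as = X bs)"

lemma cinvD: "cinv X \<Longrightarrow> list_all2 conv as bs \<Longrightarrow> X as = X bs"
  by (simp add: cinv_def)

lemma ins_econs: "ins (Suc k) c (econs u e) = econs u (ins k c e)"
  by (auto simp: ins_def econs_def fun_eq_iff split: nat.splits)

lemma econs_shift: "(\<lambda>j. econs u e (j + Suc k)) = (\<lambda>j. e (j + k))"
  by (auto simp: econs_def)

lemma econs_shift': "(\<lambda>j. econs u e (Suc (j + k))) = (\<lambda>j. e (j + k))"
  by (auto simp: econs_def)

lemma val_subst: "val I \<pi> X v e (substf F k (lft k 0 t)) = val I \<pi> X v (ins k (den v (\<lambda>j. e (j+k)) 0 t) e) F"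
proof (induction F arbitrary: k e)
  case (Par p i ts) then show ?case using den_subst[where m=0, simplified] by (simp add: comp_def)
next
  case (Eq T s u) then show ?case using den_subst[where m=0, simplified] by simp
next
  case (Atm p ts) then show ?case using den_subst[where m=0, simplified] by (simp add: comp_def)
next
  case (PV ts) then show ?case using den_subst[where m=0, simplified] by (simp add: comp_def)
next
  case (All T A) then show ?case by (simp add: lift_lft ins_econs econs_shift econs_shift')
next
  case (Ex T A) then show ?case by (simp add: lift_lft ins_econs econs_shift econs_shift')
qed auto

lemma ins0: "ins 0 c e = econs c e"
  by (auto simp: ins_def econs_def fun_eq_iff split: nat.splits)

lemma val_subst0: "val I \<pi> X v e (substf F 0 t) = val I \<pi> X v (econs (den v e 0 t) e) F"
  using val_subst[of I \<pi> X v e F 0 t] by (simp add: lft0 ins0)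

lemma cat_shift: "(\<lambda>j. cat L e (j + length L)) = e"
  by (auto simp: cat_def)

lemma ins_cat: "ins (length L) c (cat L e) = cat (L @ [c]) e"
  by (auto simp: ins_def cat_def fun_eq_iff nth_append)

lemma val_instf: "val I \<pi> X v e (instf F ts) = val I \<pi> X v (cat (rev (map (den v e 0) ts)) e) F"
proof (induction ts arbitrary: F)
  case Nil then show ?case by (simp add: cat_def)
next
  case (Cons t ts)
  have "val I \<pi> X v e (instf F (t # ts)) =
        val I \<pi> X v (cat (rev (map (den v e 0) ts)) e) (substf F (length ts) (lft (length ts) 0 t))"
    using Cons by (simp add: liftn_lft)
  also have "\<dots> = val I \<pi> X v (cat (rev (map (den v e 0) (t#ts))) e) F"
    using val_subst[of I \<pi> X v "cat (rev (map (den v e 0) ts)) e" F "length ts" t]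
      cat_shift[of "rev (map (den v e 0) ts)" e] ins_cat[of "rev (map (den v e 0) ts)"]
    by simp
  finally show ?case .
qed

lemma list_all2_map_conv: "list_all2 conv ts us \<Longrightarrow> (\<And>s s'. conv s s' \<Longrightarrow> conv (f s) (f s')) \<Longrightarrow>
   list_all2 conv (map f ts) (map f us)"
  by (induction rule: list_all2_induct) auto

lemma conv_iff: "conv a a' \<Longrightarrow> conv b b' \<Longrightarrow> conv a b = conv a' b'"
  by (meson conv_sym conv_trans)

lemma cenv_econs: "cenv e \<Longrightarrow> qt u T \<Longrightarrow> cenv (econs u e)"
  using hastype_lb[of "[]" u T] by (auto simp: cenv_def econs_def qt_def split: nat.splits)

lemma val_feq: "feq A B \<Longrightarrow> cenv e \<Longrightarrow> cval v \<Longrightarrow> \<forall>p. cinv (I p) \<Longrightarrow> \<forall>q. cinv (\<pi> q) \<Longrightarrow> cinv X \<Longrightarrow>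
   val I \<pi> X v e A = val I \<pi> X v e B"
proof (induction A arbitrary: B e)
  case (Par p i ts)
  then obtain us where B: "B = Par p i us" "list_all2 conv ts us" by (cases B) auto
  have c: "cinv (\<pi> (p, i))" using Par.prems by blast
  have L: "list_all2 conv (map (den v e 0) ts) (map (den v e 0) us)"
    using B(2) by (rule list_all2_map_conv) (simp add: conv_den Par.prems(2,3))
  show ?case using B(1) cinvD[OF c L] by simp
next
  case (Eq T s t)
  then obtain s' t' where B: "B = Eq T s' t'" "conv s s'" "conv t t'" by (cases B) auto
  show ?case using B(1) conv_iff[OF conv_den[OF B(2) Eq.prems(2,3)] conv_den[OF B(3) Eq.prems(2,3)]] by simp
next
  case (Atm p ts)
  then obtain us where B: "B = Atm p us" "list_all2 conv ts us" by (cases B) auto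
  have c: "cinv (I p)" using Atm.prems by blast
  have L: "list_all2 conv (map (den v e 0) ts) (map (den v e 0) us)"
    using B(2) by (rule list_all2_map_conv) (simp add: conv_den Atm.prems(2,3))
  show ?case using B(1) cinvD[OF c L] by simp
next
  case (PV ts)
  then obtain us where B: "B = PV us" "list_all2 conv ts us" by (cases B) auto
  have c: "cinv X" using PV.prems by blast
  have L: "list_all2 conv (map (den v e 0) ts) (map (den v e 0) us)"
    using B(2) by (rule list_all2_map_conv) (simp add: conv_den PV.prems(2,3))
  show ?case using B(1) cinvD[OF c L] by simp
next
  case (Conj A1 A2)
  then obtain B1 B2 where "B = Conj B1 B2" "feq A1 B1" "feq A2 B2" by (cases B) auto
  then show ?case using Conj.IH Conj.prems by simp
next
  case (Disj A1 A2)
  then obtain B1 B2 where "B = Disj B1 B2" "feq A1 B1" "feq A2 B2" by (cases B) auto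
  then show ?case using Disj.IH Disj.prems by simp
next
  case (Imp A1 A2)
  then obtain B1 B2 where "B = Imp B1 B2" "feq A1 B1" "feq A2 B2" by (cases B) auto
  then show ?case using Imp.IH Imp.prems by simp
next
  case (All T A)
  then obtain A' where B: "B = All T A'" "feq A A'" by (cases B) auto
  have "qt u T \<Longrightarrow> val I \<pi> X v (econs u e) A = val I \<pi> X v (econs u e) A'" for u
    using All.IH[OF B(2) cenv_econs[OF All.prems(2)] All.prems(3-6)] by simp
  then show ?case using B by simp
next
  case (Ex T A)
  then obtain A' where B: "B = Ex T A'" "feq A A'" by (cases B) auto
  have "qt u T \<Longrightarrow> val I \<pi> X v (econs u e) A = val I \<pi> X v (econs u e) A'" for u
    using Ex.IH[OF B(2) cenv_econs[OF Ex.prems(2)] Ex.prems(3-6)] by simp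
  then show ?case using B by auto
qed auto

lemma map_den_conv: "\<forall>i. conv (e i) (e' i) \<Longrightarrow> list_all2 conv (map (den v e 0) ts) (map (den v e' 0) ts)"
  by (induction ts) (auto intro: den_conv_env)

lemma val_envconv: "\<forall>i. conv (e i) (e' i) \<Longrightarrow> \<forall>p. cinv (I p) \<Longrightarrow> \<forall>q. cinv (\<pi> q) \<Longrightarrow> cinv X \<Longrightarrow>
   val I \<pi> X v e F = val I \<pi> X v e' F"
proof (induction F arbitrary: e e')
  case (Eq T s t) then show ?case using conv_iff[OF den_conv_env[of e e' v 0 s] den_conv_env[of e e' v 0 t]] by simp
next
  case (All T A)
  have "\<forall>i. conv (econs u e i) (econs u e' i)" for u
    using All(2) by (auto simp: econs_def split: nat.splits intro: conv_refl)
  then have "val I \<pi> X v (econs u e) A = val I \<pi> X v (econs u e') A" for u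
    using All.IH All.prems by blast
  then show ?case by simp
next
  case (Ex T A)
  have "\<forall>i. conv (econs u e i) (econs u e' i)" for u
    using Ex(2) by (auto simp: econs_def split: nat.splits intro: conv_refl)
  then have "val I \<pi> X v (econs u e) A = val I \<pi> X v (econs u e') A" for u
    using Ex.IH Ex.prems by blast
  then show ?case by simp
next
  case (Par p i ts)
  have "cinv (\<pi> (p, i))" using Par.prems(3) by blast
  then show ?case using cinvD[OF _ map_den_conv[OF Par.prems(1)], of "\<pi> (p, i)" v ts] by simp
next
  case (Atm p ts)
  have "cinv (I p)" using Atm.prems(2) by blast
  then show ?case using cinvD[OF _ map_den_conv[OF Atm.prems(1)], of "I p" v ts] by simp
next
  case (PV ts) then show ?case using cinvD[OF _ map_den_conv[OF PV.prems(1)], of X v ts] by simp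
qed auto

lemma val_agree_v: "\<forall>(n,T)\<in>fvf F. v n T = v' n T \<Longrightarrow> val I \<pi> X v e F = val I \<pi> X v' e F"
proof (induction F arbitrary: e)
  case (Par p i ts)
  then have eq: "map (den v e 0) ts = map (den v' e 0) ts" by (auto intro!: map_cong den_agree_v)
  show ?case unfolding val.simps eq by (rule refl)
next
  case (Atm p ts)
  then have eq: "map (den v e 0) ts = map (den v' e 0) ts" by (auto intro!: map_cong den_agree_v)
  show ?case unfolding val.simps eq by (rule refl)
next
  case (PV ts)
  then have eq: "map (den v e 0) ts = map (den v' e 0) ts" by (auto intro!: map_cong den_agree_v)
  show ?case unfolding val.simps eq by (rule refl)
next
  case (Eq T s t)
  then show ?case using den_agree_v[of s v v' e 0] den_agree_v[of t v v' e 0] by simp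
qed simp_all

lemma val_agree_pi: "\<forall>q\<in>parsf F. \<pi> q = \<pi>' q \<Longrightarrow> val I \<pi> X v e F = val I \<pi>' X v e F"
  by (induction F arbitrary: e) simp_all

lemma val_agree_I: "\<forall>q\<in>predsf F. I q = I' q \<Longrightarrow> val I \<pi> X v e F = val I' \<pi> X v e F"
  by (induction F arbitrary: e) simp_all

lemma map_den_agree: "list_all2 (hastype G) ts Ts \<Longrightarrow> \<forall>i<length G. e i = e' i \<Longrightarrow>
   map (den v e 0) ts = map (den v e' 0) ts"
proof (induction rule: list_all2_induct)
  case (Cons x xs y ys)
  have "den v e 0 x = den v e' 0 x"
    using den_agree_e[of x 0 "length G" e e' v] hastype_lb[OF Cons(1)] Cons.prems by simp
  then show ?case using Cons by simp
qed simp

lemma val_agree_e: "wff P G F \<Longrightarrow> \<forall>i<length G. e i = e' i \<Longrightarrow> val I \<pi> X v e F = val I \<pi> X v e' F"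
proof (induction F arbitrary: G e e')
  case (Par p i ts)
  have eq: "map (den v e 0) ts = map (den v e' 0) ts"
    using map_den_agree[of G ts "snd p" e e' v] Par.prems by simp
  show ?case unfolding val.simps eq ..
next
  case (Atm p ts)
  have eq: "map (den v e 0) ts = map (den v e' 0) ts"
    using map_den_agree[of G ts "snd p" e e' v] Atm.prems by simp
  show ?case unfolding val.simps eq ..
next
  case (PV ts)
  obtain Ts where "list_all2 (hastype G) ts Ts" using PV.prems(1) by (auto split: option.splits)
  then have eq: "map (den v e 0) ts = map (den v e' 0) ts"
    using map_den_agree[of G ts Ts e e' v] PV.prems(2) by simp
  show ?case unfolding val.simps eq ..
next
  case (Eq T s t)
  then show ?case using den_agree_e[of s 0 "length G" e e' v] den_agree_e[of t 0 "length G" e e' v]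
    hastype_lb[of G s T] hastype_lb[of G t T] by simp
next
  case (Conj A B) then show ?case by simp blast
next
  case (Disj A B) then show ?case by simp blast
next
  case (Imp A B) then show ?case by simp blast
next
  case (All T A)
  have "\<forall>i<length (T#G). econs u e i = econs u e' i" for u
    using All.prems(2) by (auto simp: econs_def split: nat.splits)
  then have "val I \<pi> X v (econs u e) A = val I \<pi> X v (econs u e') A" for u
    using All.IH[of "T#G"] All.prems(1) by simp
  then show ?case by simp
next
  case (Ex T A)
  have "\<forall>i<length (T#G). econs u e i = econs u e' i" for u
    using Ex.prems(2) by (auto simp: econs_def split: nat.splits)
  then have "val I \<pi> X v (econs u e) A = val I \<pi> X v (econs u e') A" for u
    using Ex.IH[of "T#G"] Ex.prems(1) by simp
  then show ?case by simp
qed simp_all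

lemma val_esubf: "\<forall>n T. lb (\<rho> n T) 0 \<Longrightarrow> val I \<pi> X w e (esubf \<rho> F) = val I \<pi> X (\<lambda>n T. esub w (\<rho> n T)) e F"
  by (induction F arbitrary: e) (simp_all add: esub_den comp_def)

lemma val_replPar: "val I \<pi> X v e (replPV (Par p i) F) = val I \<pi> (\<pi> (p, i)) v e F"
  by (induction F arbitrary: e) simp_all

lemma val_replS: "wff (Some Ts) G F \<Longrightarrow> wff None (rev Ts) S \<Longrightarrow>
  val I \<pi> Z v E (replPV (instf S) F) = val I \<pi> (\<lambda>as. val I \<pi> Z v (cat (rev as) e0) S) v E F"
proof (induction F arbitrary: G E)
  case (PV ts)
  then have len: "length ts = length Ts" by (auto dest: list_all2_lengthD)
  show ?case
    by (simp add: val_instf) (rule val_agree_e[OF PV.prems(2)], simp add: cat_def len)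
next
  case (Conj A B) then show ?case using Conj.IH[of G] by simp
next
  case (Disj A B) then show ?case using Disj.IH[of G] by simp
next
  case (Imp A B) then show ?case using Imp.IH[of G] by simp
next
  case (All T A) then show ?case using All.IH[of "T#G"] by simp
next
  case (Ex T A) then show ?case using Ex.IH[of "T#G"] by simp
qed simp_all


definition Rd :: "defn \<Rightarrow> (pred \<times> pred) set" where
  "Rd D = {(q, p). \<exists>k b. D p = Some (k, b) \<and> q \<in> predsf b}"

definition en :: "nat \<Rightarrow> trm" where "en = (\<lambda>_. Cn 0 (Base 0))"
definition v0 :: "nat \<Rightarrow> ty \<Rightarrow> trm" where "v0 = (\<lambda>n T. Cn 0 T)"
definition \<pi>0 :: pinterp where "\<pi>0 = (\<lambda>_ _. False)"
definition Xn :: "trm list \<Rightarrow> bool" where "Xn = (\<lambda>_. False)"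

definition pre :: "interp \<Rightarrow> pred \<Rightarrow> fm \<Rightarrow> (trm list \<Rightarrow> bool) \<Rightarrow> bool" where
  "pre I p b X \<longleftrightarrow> (\<forall>as. list_all2 qt as (snd p) \<longrightarrow> val I \<pi>0 X v0 (cat (rev as) en) b \<longrightarrow> X as)"

definition post :: "interp \<Rightarrow> pred \<Rightarrow> fm \<Rightarrow> (trm list \<Rightarrow> bool) \<Rightarrow> bool" where
  "post I p b X \<longleftrightarrow> (\<forall>as. list_all2 qt as (snd p) \<longrightarrow> X as \<longrightarrow> val I \<pi>0 X v0 (cat (rev as) en) b)"

definition Fst :: "defn \<Rightarrow> interp \<Rightarrow> interp" where
  "Fst D I p = (case D p of None \<Rightarrow> (\<lambda>_. False)
     | Some (Mu, b) \<Rightarrow> (\<lambda>as. \<forall>X. cinv X \<longrightarrow> pre I p b X \<longrightarrow> X as)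
     | Some (Nu, b) \<Rightarrow> (\<lambda>as. \<exists>X. cinv X \<and> post I p b X \<and> X as))"

definition Ip :: "defn \<Rightarrow> interp" where "Ip D = wfrec (Rd D) (Fst D)"

lemma finite_predsf: "finite (predsf F)"
  by (induction F) simp_all

lemma wf_Rd: assumes "wf_defn D" shows "wf (Rd D)"
proof -
  let ?A = "{(p, q). \<exists>k b. D p = Some (k, b) \<and> q \<in> predsf b}"
  have ac: "acyclic ?A" using assms by (simp add: wf_defn_def)
  have "?A \<subseteq> Sigma (dom D) (\<lambda>p. predsf (snd (the (D p))))" by auto
  moreover have "finite (Sigma (dom D) (\<lambda>p. predsf (snd (the (D p)))))"
    using assms by (intro finite_SigmaI) (auto simp: wf_defn_def finite_predsf)
  ultimately have "finite ?A" by (rule finite_subset)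
  then have "wf (?A\<inverse>)" using ac by (rule finite_acyclic_wf_converse)
  moreover have "?A\<inverse> = Rd D" by (auto simp: Rd_def)
  ultimately show ?thesis by simp
qed

lemma Fst_cut: "Fst D (cut I (Rd D) p) p = Fst D I p"
proof -
  have agree: "D p = Some (k, b) \<Longrightarrow> val (cut I (Rd D) p) \<pi> X v e b = val I \<pi> X v e b" for k b \<pi> X v e
    by (rule val_agree_I) (auto simp: cut_apply Rd_def)
  show ?thesis
    by (cases "D p") (auto simp: Fst_def pre_def post_def agree split: kind.splits)
qed

lemma Ip_eq: "wf_defn D \<Longrightarrow> Ip D p = Fst D (Ip D) p"
  unfolding Ip_def using wfrec[OF wf_Rd, of D "Fst D" p] Fst_cut by simp

lemma Ip_Mu: "wf_defn D \<Longrightarrow> D p = Some (Mu, b) \<Longrightarrow> Ip D p as = (\<forall>X. cinv X \<longrightarrow> pre (Ip D) p b X \<longrightarrow> X as)"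
  by (subst Ip_eq) (auto simp: Fst_def)

lemma Ip_Nu: "wf_defn D \<Longrightarrow> D p = Some (Nu, b) \<Longrightarrow> Ip D p as = (\<exists>X. cinv X \<and> post (Ip D) p b X \<and> X as)"
  by (subst Ip_eq) (auto simp: Fst_def)

lemma cinv_Ip: "wf_defn D \<Longrightarrow> cinv (Ip D p)"
proof (cases "D p")
  case None
  assume "wf_defn D" then show ?thesis by (subst Ip_eq) (auto simp: Fst_def None cinv_def)
next
  case (Some a)
  assume w: "wf_defn D"
  obtain k b where a: "a = (k, b)" by (cases a)
  show ?thesis
  proof (cases k)
    case Mu
    show ?thesis unfolding cinv_def using Ip_Mu[OF w, of p b] Some a Mu cinvD by metis
  next
    case Nu
    show ?thesis unfolding cinv_def using Ip_Nu[OF w, of p b] Some a Nu cinvD by metis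
  qed
qed

definition wfv :: "(nat \<Rightarrow> ty \<Rightarrow> trm) \<Rightarrow> bool" where
  "wfv v \<longleftrightarrow> (\<forall>n T. lb (v n T) 0 \<and> fvt (v n T) = {}) \<and> (\<forall>n T. efo T \<longrightarrow> hastype [] (v n T) T)"

definition adm :: "defn \<Rightarrow> pinterp \<Rightarrow> bool" where
  "adm D \<pi> \<longleftrightarrow> (\<forall>p i. cinv (\<pi> (p, i)) \<and> (\<forall>b. D p = Some (Mu, b) \<longrightarrow> pre (Ip D) p b (\<pi> (p, i)))
      \<and> (\<forall>b. D p = Some (Nu, b) \<longrightarrow> post (Ip D) p b (\<pi> (p, i))))"

definition valid :: "defn \<Rightarrow> fm multiset \<Rightarrow> fm \<Rightarrow> bool" where
  "valid D G C \<longleftrightarrow> (\<forall>\<pi> v. adm D \<pi> \<longrightarrow> wfv v \<longrightarrow> (\<forall>F\<in>#G. val (Ip D) \<pi> Xn v en F) \<longrightarrow> val (Ip D) \<pi> Xn v en C)"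

lemma cenv_en: "cenv en" by (simp add: cenv_def en_def)
lemma en_fv: "fvt (en i) = {}" by (simp add: en_def)
lemma wfv_cval: "wfv v \<Longrightarrow> cval v" by (simp add: wfv_def cval_def)
lemma cinv_Xn: "cinv Xn" by (simp add: cinv_def Xn_def)
lemma adm_cinv: "adm D \<pi> \<Longrightarrow> \<forall>q. cinv (\<pi> q)" by (auto simp: adm_def)

lemma den_closed: "hastype [] t T \<Longrightarrow> den v e 0 t = esub v t"
  using hastype_lb[of "[]" t T] den_lb by simp

lemma qt_den: "hastype [] t T \<Longrightarrow> wfv v \<Longrightarrow> qt (den v en 0 t) T"
  unfolding qt_def
  using den_type[of "[]" t T "[]" "[]" en v] den_fvfree[of en v 0 t] en_fv
  by (auto simp: wfv_def)

lemma qt_dens: "list_all2 (hastype []) ts Ts \<Longrightarrow> wfv v \<Longrightarrow> list_all2 qt (map (den v en 0) ts) Ts"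
  by (induction rule: list_all2_induct) (auto intro: qt_den)

lemma qt_lb: "qt u T \<Longrightarrow> lb u 0"
  using hastype_lb[of "[]" u T] by (simp add: qt_def)

lemma val_b: assumes "wf_defn D" "D p = Some (k, b)" "length as = length (snd p)"
  shows "val I \<pi> X v (cat (rev as) e) b = val I \<pi>0 X v0 (cat (rev as) en) b"
proof -
  have b: "wff (Some (snd p)) (rev (snd p)) b \<and> parsf b = {} \<and> fvf b = {}"
    using assms(1,2) unfolding wf_defn_def by blast
  then have b: "wff (Some (snd p)) (rev (snd p)) b" "parsf b = {}" "fvf b = {}" by auto
  have "val I \<pi> X v (cat (rev as) e) b = val I \<pi>0 X v (cat (rev as) e) b"
    using b by (intro val_agree_pi) simp
  also have "\<dots> = val I \<pi>0 X v0 (cat (rev as) e) b"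
    using b by (intro val_agree_v) simp
  also have "\<dots> = val I \<pi>0 X v0 (cat (rev as) en) b"
    using b(1) by (rule val_agree_e) (simp add: cat_def assms(3))
  finally show ?thesis .
qed

definition upd :: "(nat \<Rightarrow> ty \<Rightarrow> trm) \<Rightarrow> nat list \<Rightarrow> ty list \<Rightarrow> trm list \<Rightarrow> nat \<Rightarrow> ty \<Rightarrow> trm" where
  "upd v ys Ts as = (\<lambda>n T. case map_of (zip (zip ys Ts) as) (n, T) of None \<Rightarrow> v n T | Some a \<Rightarrow> a)"

lemma upd_eig: assumes "distinct ys" "length ys = length Ts" "length as = length Ts"
  shows "map (den (upd v ys Ts as) e 0) (eigvars ys Ts) = as"
proof (rule nth_equalityI)
  show "length (map (den (upd v ys Ts as) e 0) (eigvars ys Ts)) = length as"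
    using assms by (simp add: eigvars_def)
  fix i assume "i < length (map (den (upd v ys Ts as) e 0) (eigvars ys Ts))"
  then have i: "i < length Ts" using assms by (simp add: eigvars_def)
  have d: "distinct (zip ys Ts)" using assms(1) by (rule distinct_zipI1)
  have "map_of (zip (zip ys Ts) as) (zip ys Ts ! i) = Some (as ! i)"
    by (rule map_of_zip_nth) (use assms i d in auto)
  then show "map (den (upd v ys Ts as) e 0) (eigvars ys Ts) ! i = as ! i"
    using assms i by (simp add: eigvars_def upd_def)
qed

lemma upd_wfv: assumes "wfv v" "list_all2 qt as Ts" "length ys = length Ts"
  shows "wfv (upd v ys Ts as)"
proof -
  have key: "map_of (zip (zip ys Ts) as) (n, T) = Some a \<Longrightarrow> qt a T" for n T a
  proof -
    assume "map_of (zip (zip ys Ts) as) (n, T) = Some a"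
    then have "((n, T), a) \<in> set (zip (zip ys Ts) as)" by (rule map_of_SomeD)
    then obtain i where i: "i < length (zip (zip ys Ts) as)" "zip (zip ys Ts) as ! i = ((n, T), a)"
      by (auto simp: in_set_conv_nth)
    then have "Ts ! i = T" "as ! i = a" "i < length Ts" by auto
    then show "qt a T" using assms(2) by (auto dest: list_all2_nthD2)
  qed
  show ?thesis using assms(1) key qt_lb
    by (auto simp: wfv_def upd_def qt_def split: option.splits) blast+
qed

lemma rel_mset_ex: "rel_mset R A B \<Longrightarrow> b \<in># B \<Longrightarrow> \<exists>a\<in>#A. R a b"
  by (induction rule: rel_mset_induct) auto

lemma cat_conv: "list_all2 conv as bs \<Longrightarrow> \<forall>i. conv (cat (rev as) e i) (cat (rev bs) e i)"
proof
  fix i assume "list_all2 conv as bs"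
  then have r: "list_all2 conv (rev as) (rev bs)" by simp
  then have "length (rev as) = length (rev bs)" by (rule list_all2_lengthD)
  then show "conv (cat (rev as) e i) (cat (rev bs) e i)"
    using list_all2_nthD[OF r] by (auto simp: cat_def intro: conv_refl)
qed


lemma rel_mset_ex2: "rel_mset R A B \<Longrightarrow> a \<in># A \<Longrightarrow> \<exists>b\<in>#B. R a b"
  by (induction rule: rel_mset_induct) auto

lemma in_sum_list: "x \<in> set xs \<Longrightarrow> F \<in># fst x \<Longrightarrow> F \<in># sum_list (map fst xs)"
  by (induction xs) auto

lemma unfold_Par: "val I \<pi> Z v e (unfold b (Par p i) ts) = val I \<pi> (\<pi> (p, i)) v (cat (rev (map (den v e 0) ts)) e) b"
  by (simp add: unfold_def val_instf val_replPar)

lemma adm_upd: "adm D \<pi> \<Longrightarrow> cinv X \<Longrightarrow> (\<forall>b. D p = Some (Mu, b) \<longrightarrow> pre (Ip D) p b X) \<Longrightarrow>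
   (\<forall>b. D p = Some (Nu, b) \<longrightarrow> post (Ip D) p b X) \<Longrightarrow> adm D (\<pi>((p, i) := X))"
  unfolding adm_def by auto

lemma adm_pre: "adm D \<pi> \<Longrightarrow> D p = Some (Mu, b) \<Longrightarrow> pre (Ip D) p b (\<pi> (p, i))"
  unfolding adm_def by blast

lemma adm_post: "adm D \<pi> \<Longrightarrow> D p = Some (Nu, b) \<Longrightarrow> post (Ip D) p b (\<pi> (p, i))"
  unfolding adm_def by blast

lemma key:
  assumes w: "wf_defn D" and Dp: "D p = Some (k, b)" and S: "wf_inv p S" and d: "distinct ys"
    and l: "length ys = length (snd p)" and vv: "wfv v" and as: "list_all2 qt as (snd p)"
  shows "val (Ip D) \<pi> Xn (upd v ys (snd p) as) en (unfold b (instf S) (eigvars ys (snd p)))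
          = val (Ip D) \<pi>0 (\<lambda>as. val (Ip D) \<pi> Xn v (cat (rev as) en) S) v0 (cat (rev as) en) b"
    and "val (Ip D) \<pi> Xn (upd v ys (snd p) as) en (instf S (eigvars ys (snd p)))
          = val (Ip D) \<pi> Xn v (cat (rev as) en) S"
proof -
  let ?v = "upd v ys (snd p) as"
  have la: "length as = length (snd p)" using as by (rule list_all2_lengthD)
  have m: "map (den ?v en 0) (eigvars ys (snd p)) = as" using upd_eig[OF d l la] .
  have Sw: "wff None (rev (snd p)) S" "fvf S = {}" using S by (auto simp: wf_inv_def)
  have Sv: "(\<lambda>as. val (Ip D) \<pi> Xn ?v (cat (rev as) en) S) = (\<lambda>as. val (Ip D) \<pi> Xn v (cat (rev as) en) S)"
    using Sw(2) by (intro ext val_agree_v) simp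
  have bw: "wff (Some (snd p)) (rev (snd p)) b"
  proof -
    have "list_all efo (snd p) \<and> wff (Some (snd p)) (rev (snd p)) b \<and> parsf b = {} \<and> fvf b = {}"
      using w Dp unfolding wf_defn_def by blast
    then show ?thesis by blast
  qed
  show "val (Ip D) \<pi> Xn ?v en (instf S (eigvars ys (snd p))) = val (Ip D) \<pi> Xn v (cat (rev as) en) S"
    using fun_cong[OF Sv, of as] by (simp add: val_instf m)
  have "val (Ip D) \<pi> Xn ?v en (unfold b (instf S) (eigvars ys (snd p)))
      = val (Ip D) \<pi> Xn ?v (cat (rev as) en) (replPV (instf S) b)"
    by (simp add: unfold_def val_instf m)
  also have "\<dots> = val (Ip D) \<pi> (\<lambda>as. val (Ip D) \<pi> Xn ?v (cat (rev as) en) S) ?v (cat (rev as) en) b"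
    by (rule val_replS[OF bw Sw(1)])
  also have "\<dots> = val (Ip D) \<pi> (\<lambda>as. val (Ip D) \<pi> Xn v (cat (rev as) en) S) ?v (cat (rev as) en) b"
    by (simp only: Sv)
  also have "\<dots> = val (Ip D) \<pi>0 (\<lambda>as. val (Ip D) \<pi> Xn v (cat (rev as) en) S) v0 (cat (rev as) en) b"
    by (rule val_b[OF w Dp la])
  finally show "val (Ip D) \<pi> Xn ?v en (unfold b (instf S) (eigvars ys (snd p)))
      = val (Ip D) \<pi>0 (\<lambda>as. val (Ip D) \<pi> Xn v (cat (rev as) en) S) v0 (cat (rev as) en) b" .
qed

lemma cinv_XS: "wf_defn D \<Longrightarrow> adm D \<pi> \<Longrightarrow> cinv (\<lambda>as. val (Ip D) \<pi> Xn v (cat (rev as) en) S)"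
  unfolding cinv_def
  using val_envconv[OF cat_conv _ _ cinv_Xn] cinv_Ip adm_cinv by blast

lemma single_mset: "(\<forall>F\<in>#{#x#}. P F) = P x" by simp

lemma soundness: assumes w: "wf_defn D" shows "deriv D G C \<Longrightarrow> valid D G C"
proof (induction rule: deriv.induct)
  case (conversion G C G' C')
  show ?case unfolding valid_def
  proof (intro allI impI)
    fix \<pi> v assume a: "adm D \<pi>" "wfv v" "\<forall>F\<in>#G'. val (Ip D) \<pi> Xn v en F"
    have fe: "feq A B \<Longrightarrow> val (Ip D) \<pi> Xn v en A = val (Ip D) \<pi> Xn v en B" for A B
      using val_feq[of A B en v "Ip D" \<pi> Xn] cenv_en wfv_cval[OF a(2)] cinv_Ip[OF w] adm_cinv[OF a(1)] cinv_Xn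
      by blast
    have "\<forall>F\<in>#G. val (Ip D) \<pi> Xn v en F"
    proof
      fix F assume "F \<in># G"
      then obtain F' where "F' \<in># G'" "feq F F'" using rel_mset_ex2[OF \<open>rel_mset feq G G'\<close>] by blast
      then show "val (Ip D) \<pi> Xn v en F" using a(3) fe by blast
    qed
    then have "val (Ip D) \<pi> Xn v en C" using conversion.IH a unfolding valid_def by blast
    then show "val (Ip D) \<pi> Xn v en C'" using fe[OF \<open>feq C C'\<close>] by simp
  qed
next
  case (init C) then show ?case by (simp add: valid_def)
next
  case (contrL G B C) then show ?case by (simp add: valid_def)
next
  case (weakL G C B) then show ?case by (simp add: valid_def)
next
  case (mc xs G C)
  show ?case unfolding valid_def
  proof (intro allI impI)
    fix \<pi> v assume a: "adm D \<pi>" "wfv v" "\<forall>F\<in>#sum_list (map fst xs) + G. val (Ip D) \<pi> Xn v en F"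
    have "\<forall>x\<in>set xs. val (Ip D) \<pi> Xn v en (snd x)"
    proof
      fix x assume x: "x \<in> set xs"
      then have "valid D (fst x) (snd x)" using \<open>\<forall>x\<in>set xs. deriv D (fst x) (snd x) \<and> valid D (fst x) (snd x)\<close> by blast
      moreover have "\<forall>F\<in>#fst x. val (Ip D) \<pi> Xn v en F" using a(3) in_sum_list[OF x] by auto
      ultimately show "val (Ip D) \<pi> Xn v en (snd x)" using a unfolding valid_def by blast
    qed
    then have "\<forall>F\<in>#mset (map snd xs) + G. val (Ip D) \<pi> Xn v en F" using a(3) by auto
    then show "val (Ip D) \<pi> Xn v en C" using \<open>valid D (mset (map snd xs) + G) C\<close> a unfolding valid_def by blast
  qed
next
  case (botL G C) then show ?case by (simp add: valid_def)
next
  case (topR G) then show ?case by (simp add: valid_def)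
next
  case (conjL1 G A C B) then show ?case by (simp add: valid_def)
next
  case (conjL2 G B C A) then show ?case by (simp add: valid_def)
next
  case (conjR G A B) then show ?case by (simp add: valid_def)
next
  case (disjL G A C B) then show ?case by (simp add: valid_def) blast
next
  case (disjR1 G A B) then show ?case by (simp add: valid_def)
next
  case (disjR2 G B A) then show ?case by (simp add: valid_def)
next
  case (impL G A B C) then show ?case by (simp add: valid_def)
next
  case (impR G A B) then show ?case by (simp add: valid_def)
next
  case (allL G A t C T)
  show ?case unfolding valid_def
  proof (intro allI impI)
    fix \<pi> v assume a: "adm D \<pi>" "wfv v" "\<forall>F\<in>#G + {#All T A#}. val (Ip D) \<pi> Xn v en F"
    have "qt (den v en 0 t) T" using qt_den[OF \<open>hastype [] t T\<close> a(2)] .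
    then have "val (Ip D) \<pi> Xn v en (substf A 0 t)" using a(3) by (simp add: val_subst0)
    then show "val (Ip D) \<pi> Xn v en C" using allL.IH a unfolding valid_def by simp
  qed
next
  case (allR G A y T)
  show ?case unfolding valid_def
  proof (intro allI impI)
    fix \<pi> v assume a: "adm D \<pi>" "wfv v" "\<forall>F\<in>#G. val (Ip D) \<pi> Xn v en F"
    show "val (Ip D) \<pi> Xn v en (All T A)"
    proof (simp, intro allI impI)
      fix u assume u: "qt u T"
      define v' where "v' = (\<lambda>n S. if n = y \<and> S = T then u else v n S)"
      have wv: "wfv v'" using a(2) u qt_lb by (auto simp: v'_def wfv_def qt_def)
      have ag: "(y, T) \<notin> fvf F \<Longrightarrow> val (Ip D) \<pi> Xn v e F = val (Ip D) \<pi> Xn v' e F" for F e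
        by (rule val_agree_v) (auto simp: v'_def)
      have "\<forall>F\<in>#G. val (Ip D) \<pi> Xn v' en F" using a(3) ag \<open>(y, T) \<notin> fvs G \<union> fvf A\<close> by (auto simp: fvs_def)
      then have "val (Ip D) \<pi> Xn v' en (substf A 0 (Fv y T))" using allR.IH a(1) wv unfolding valid_def by blast
      then have "val (Ip D) \<pi> Xn v' (econs u en) A" by (simp add: val_subst0 v'_def)
      then show "val (Ip D) \<pi> Xn v (econs u en) A" using ag[of A] \<open>(y, T) \<notin> fvs G \<union> fvf A\<close> by simp
    qed
  qed
next
  case (exL G A y T C)
  show ?case unfolding valid_def
  proof (intro allI impI)
    fix \<pi> v assume a: "adm D \<pi>" "wfv v" "\<forall>F\<in>#G + {#Ex T A#}. val (Ip D) \<pi> Xn v en F"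
    then obtain u where u: "qt u T" "val (Ip D) \<pi> Xn v (econs u en) A" by auto
    define v' where "v' = (\<lambda>n S. if n = y \<and> S = T then u else v n S)"
    have wv: "wfv v'" using a(2) u qt_lb by (auto simp: v'_def wfv_def qt_def)
    have ag: "(y, T) \<notin> fvf F \<Longrightarrow> val (Ip D) \<pi> Xn v e F = val (Ip D) \<pi> Xn v' e F" for F e
      by (rule val_agree_v) (auto simp: v'_def)
    have "\<forall>F\<in>#G. val (Ip D) \<pi> Xn v' en F" using a(3) ag \<open>(y, T) \<notin> fvs G \<union> fvf A \<union> fvf C\<close> by (auto simp: fvs_def)
    moreover have "val (Ip D) \<pi> Xn v' en (substf A 0 (Fv y T))"
      using u(2) ag[of A] \<open>(y, T) \<notin> fvs G \<union> fvf A \<union> fvf C\<close> by (simp add: val_subst0 v'_def)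
    ultimately have "val (Ip D) \<pi> Xn v' en C" using exL.IH a(1) wv unfolding valid_def by simp
    then show "val (Ip D) \<pi> Xn v en C" using ag[of C] \<open>(y, T) \<notin> fvs G \<union> fvf A \<union> fvf C\<close> by simp
  qed
next
  case (exR G A t T)
  show ?case unfolding valid_def
  proof (intro allI impI)
    fix \<pi> v assume a: "adm D \<pi>" "wfv v" "\<forall>F\<in>#G. val (Ip D) \<pi> Xn v en F"
    have "qt (den v en 0 t) T" using qt_den[OF \<open>hastype [] t T\<close> a(2)] .
    moreover have "val (Ip D) \<pi> Xn v en (substf A 0 t)" using exR.IH a unfolding valid_def by blast
    ultimately show "val (Ip D) \<pi> Xn v en (Ex T A)" by (auto simp: val_subst0)
  qed
next
  case (eqR G T t) then show ?case by (simp add: valid_def conv_refl)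
next
  case (eqL s t G C T)
  show ?case unfolding valid_def
  proof (intro allI impI)
    fix \<pi> v assume a: "adm D \<pi>" "wfv v" "\<forall>F\<in>#G + {#Eq T s t#}. val (Ip D) \<pi> Xn v en F"
    have ty: "hastype [] s T" "hastype [] t T" using \<open>wfseq (G + {#Eq T s t#}) C\<close> by (auto simp: wfseq_def)
    have "conv (esub v s) (esub v t)" using a(3) by (simp add: den_closed[OF ty(1)] den_closed[OF ty(2)])
    moreover have "wf_esub v" using a(2) by (simp add: wfv_def wf_esub_def)
    ultimately have vd: "valid D (image_mset (esubf v) G) (esubf v C)" using eqL.IH by blast
    have vv: "(\<lambda>n T. esub v (v n T)) = v" using a(2) by (auto simp: wfv_def esub_fvfree)
    have es: "val (Ip D) \<pi> Xn v en (esubf v F) = val (Ip D) \<pi> Xn v en F" for F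
      using val_esubf[of v "Ip D" \<pi> Xn v en F] a(2) vv by (simp add: wfv_def)
    have g: "\<forall>F\<in>#image_mset (esubf v) G. val (Ip D) \<pi> Xn v en F" using a(3) es by simp
    then have "val (Ip D) \<pi> Xn v en (esubf v C)" using vd a(1,2) unfolding valid_def by blast
    then show "val (Ip D) \<pi> Xn v en C" using es by simp
  qed
next
  case (IL p b S ys G ts C)
  show ?case unfolding valid_def
  proof (intro allI impI)
    fix \<pi> v assume a: "adm D \<pi>" "wfv v" "\<forall>F\<in>#G + {#Atm p ts#}. val (Ip D) \<pi> Xn v en F"
    define XS where "XS = (\<lambda>as. val (Ip D) \<pi> Xn v (cat (rev as) en) S)"
    have ci: "cinv XS" unfolding XS_def by (rule cinv_XS[OF w a(1)])
    have pr: "pre (Ip D) p b XS" unfolding pre_def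
    proof (intro allI impI)
      fix as assume as: "list_all2 qt as (snd p)" and h: "val (Ip D) \<pi>0 XS v0 (cat (rev as) en) b"
      have wv: "wfv (upd v ys (snd p) as)" using upd_wfv[OF a(2) as IL(4)] .
      have "val (Ip D) \<pi> Xn (upd v ys (snd p) as) en (unfold b (instf S) (eigvars ys (snd p)))"
        using key(1)[OF w IL(1) IL(2) IL(3) IL(4) a(2) as, of \<pi>] h by (simp add: XS_def)
      then have "val (Ip D) \<pi> Xn (upd v ys (snd p) as) en (instf S (eigvars ys (snd p)))"
        using \<open>valid D {#unfold b (instf S) (eigvars ys (snd p))#} (instf S (eigvars ys (snd p)))\<close> a(1) wv unfolding valid_def by simp
      then show "XS as" using key(2)[OF w IL(1) IL(2) IL(3) IL(4) a(2) as, of \<pi>] by (simp add: XS_def)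
    qed
    have "Ip D p (map (den v en 0) ts)" using a(3) by simp
    then have "XS (map (den v en 0) ts)" using Ip_Mu[OF w IL(1)] ci pr by blast
    then have "val (Ip D) \<pi> Xn v en (instf S ts)" by (simp add: XS_def val_instf)
    then show "val (Ip D) \<pi> Xn v en C" using \<open>valid D (G + {#instf S ts#}) C\<close> a unfolding valid_def by simp
  qed
next
  case (IR p b i G ts)
  show ?case unfolding valid_def
  proof (intro allI impI)
    fix \<pi> v assume a: "adm D \<pi>" "wfv v" "\<forall>F\<in>#G. val (Ip D) \<pi> Xn v en F"
    let ?as = "map (den v en 0) ts"
    have ty: "list_all2 (hastype []) ts (snd p)" using \<open>wfseq G (Atm p ts)\<close> by (simp add: wfseq_def)
    have qa: "list_all2 qt ?as (snd p)" using qt_dens[OF ty a(2)] .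
    have la: "length ?as = length (snd p)" using qa by (rule list_all2_lengthD)
    have "X ?as" if X: "cinv X" "pre (Ip D) p b X" for X
    proof -
      have ad: "adm D (\<pi>((p, i) := X))" using adm_upd[OF a(1) X(1)] X(2) IR(1) by auto
      have "\<forall>F\<in>#G. val (Ip D) (\<pi>((p, i) := X)) Xn v en F"
      proof
        fix F assume F: "F \<in># G"
        then have "(p, i) \<notin> parsf F" using \<open>(p, i) \<notin> pars G\<close> by (auto simp: pars_def)
        then have "val (Ip D) \<pi> Xn v en F = val (Ip D) (\<pi>((p, i) := X)) Xn v en F"
          by (intro val_agree_pi) auto
        then show "val (Ip D) (\<pi>((p, i) := X)) Xn v en F" using a(3) F by simp
      qed
      then have "val (Ip D) (\<pi>((p, i) := X)) Xn v en (unfold b (Par p i) ts)"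
        using \<open>valid D G (unfold b (Par p i) ts)\<close> ad a(2) unfolding valid_def by blast
      then have "val (Ip D) (\<pi>((p, i) := X)) X v (cat (rev ?as) en) b" by (simp add: unfold_Par)
      then have "val (Ip D) \<pi>0 X v0 (cat (rev ?as) en) b" using val_b[OF w IR(1) la, where I="Ip D" and \<pi>="\<pi>((p, i) := X)" and X=X and v=v and e=en] by simp
      then show "X ?as" using X(2) qa by (simp add: pre_def)
    qed
    then show "val (Ip D) \<pi> Xn v en (Atm p ts)" using Ip_Mu[OF w IR(1)] by auto
  qed
next
  case (IRp p b G i ts)
  show ?case unfolding valid_def
  proof (intro allI impI)
    fix \<pi> v assume a: "adm D \<pi>" "wfv v" "\<forall>F\<in>#G. val (Ip D) \<pi> Xn v en F"
    let ?as = "map (den v en 0) ts"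
    have ty: "list_all2 (hastype []) ts (snd p)" using \<open>wfseq G (Par p i ts)\<close> by (simp add: wfseq_def)
    have qa: "list_all2 qt ?as (snd p)" using qt_dens[OF ty a(2)] .
    have la: "length ?as = length (snd p)" using qa by (rule list_all2_lengthD)
    have "val (Ip D) \<pi> Xn v en (unfold b (Par p i) ts)" using \<open>valid D G (unfold b (Par p i) ts)\<close> a unfolding valid_def by blast
    then have "val (Ip D) \<pi> (\<pi> (p, i)) v (cat (rev ?as) en) b" by (simp add: unfold_Par)
    then have "val (Ip D) \<pi>0 (\<pi> (p, i)) v0 (cat (rev ?as) en) b" using val_b[OF w IRp(1) la, where I="Ip D" and \<pi>=\<pi> and X="\<pi> (p, i)" and v=v and e=en] by simp
    moreover have "pre (Ip D) p b (\<pi> (p, i))" using adm_pre[OF a(1) IRp(1)] .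
    ultimately show "val (Ip D) \<pi> Xn v en (Par p i ts)" using qa by (simp add: pre_def)
  qed
next
  case (CIL p b i G C ts)
  show ?case unfolding valid_def
  proof (intro allI impI)
    fix \<pi> v assume a: "adm D \<pi>" "wfv v" "\<forall>F\<in>#G + {#Atm p ts#}. val (Ip D) \<pi> Xn v en F"
    let ?as = "map (den v en 0) ts"
    have ty: "list_all2 (hastype []) ts (snd p)" using \<open>wfseq (G + {#Atm p ts#}) C\<close> by (simp add: wfseq_def)
    have qa: "list_all2 qt ?as (snd p)" using qt_dens[OF ty a(2)] .
    have la: "length ?as = length (snd p)" using qa by (rule list_all2_lengthD)
    obtain X where X: "cinv X" "post (Ip D) p b X" "X ?as" using a(3) Ip_Nu[OF w CIL(1)] by auto
    have ad: "adm D (\<pi>((p, i) := X))" using adm_upd[OF a(1) X(1)] X(2) CIL(1) by auto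
    have ag: "(p, i) \<notin> parsf F \<Longrightarrow> val (Ip D) \<pi> Xn v en F = val (Ip D) (\<pi>((p, i) := X)) Xn v en F" for F
      by (rule val_agree_pi) auto
    have "val (Ip D) \<pi>0 X v0 (cat (rev ?as) en) b" using X(2,3) qa by (simp add: post_def)
    then have "val (Ip D) (\<pi>((p, i) := X)) X v (cat (rev ?as) en) b" using val_b[OF w CIL(1) la, where I="Ip D" and \<pi>="\<pi>((p, i) := X)" and X=X and v=v and e=en] by simp
    then have "val (Ip D) (\<pi>((p, i) := X)) Xn v en (unfold b (Par p i) ts)" by (simp add: unfold_Par)
    moreover have "\<forall>F\<in>#G. val (Ip D) (\<pi>((p, i) := X)) Xn v en F"
      using a(3) \<open>(p, i) \<notin> pars G \<union> parsf C\<close> ag by (auto simp: pars_def)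
    ultimately have "val (Ip D) (\<pi>((p, i) := X)) Xn v en C" using \<open>valid D (G + {#unfold b (Par p i) ts#}) C\<close> ad a(2) unfolding valid_def by simp
    then show "val (Ip D) \<pi> Xn v en C" using ag[of C] \<open>(p, i) \<notin> pars G \<union> parsf C\<close> by simp
  qed
next
  case (CILp p b G i ts C)
  show ?case unfolding valid_def
  proof (intro allI impI)
    fix \<pi> v assume a: "adm D \<pi>" "wfv v" "\<forall>F\<in>#G + {#Par p i ts#}. val (Ip D) \<pi> Xn v en F"
    let ?as = "map (den v en 0) ts"
    have ty: "list_all2 (hastype []) ts (snd p)" using \<open>wfseq (G + {#Par p i ts#}) C\<close> by (simp add: wfseq_def)
    have qa: "list_all2 qt ?as (snd p)" using qt_dens[OF ty a(2)] .
    have la: "length ?as = length (snd p)" using qa by (rule list_all2_lengthD)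
    have "post (Ip D) p b (\<pi> (p, i))" using adm_post[OF a(1) CILp(1)] .
    then have "val (Ip D) \<pi>0 (\<pi> (p, i)) v0 (cat (rev ?as) en) b" using a(3) qa by (simp add: post_def)
    then have "val (Ip D) \<pi> (\<pi> (p, i)) v (cat (rev ?as) en) b" using val_b[OF w CILp(1) la, where I="Ip D" and \<pi>=\<pi> and X="\<pi> (p, i)" and v=v and e=en] by simp
    then have "val (Ip D) \<pi> Xn v en (unfold b (Par p i) ts)" by (simp add: unfold_Par)
    then show "val (Ip D) \<pi> Xn v en C" using \<open>valid D (G + {#unfold b (Par p i) ts#}) C\<close> a unfolding valid_def by simp
  qed
next
  case (CIR p b S ys G ts)
  show ?case unfolding valid_def
  proof (intro allI impI)
    fix \<pi> v assume a: "adm D \<pi>" "wfv v" "\<forall>F\<in>#G. val (Ip D) \<pi> Xn v en F"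
    define XS where "XS = (\<lambda>as. val (Ip D) \<pi> Xn v (cat (rev as) en) S)"
    have ci: "cinv XS" unfolding XS_def by (rule cinv_XS[OF w a(1)])
    have po: "post (Ip D) p b XS" unfolding post_def
    proof (intro allI impI)
      fix as assume as: "list_all2 qt as (snd p)" and h: "XS as"
      have wv: "wfv (upd v ys (snd p) as)" using upd_wfv[OF a(2) as CIR(4)] .
      have "val (Ip D) \<pi> Xn (upd v ys (snd p) as) en (instf S (eigvars ys (snd p)))"
        using key(2)[OF w CIR(1) CIR(2) CIR(3) CIR(4) a(2) as, of \<pi>] h by (simp add: XS_def)
      then have "val (Ip D) \<pi> Xn (upd v ys (snd p) as) en (unfold b (instf S) (eigvars ys (snd p)))"
        using \<open>valid D {#instf S (eigvars ys (snd p))#} (unfold b (instf S) (eigvars ys (snd p)))\<close> a(1) wv unfolding valid_def by simp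
      then show "val (Ip D) \<pi>0 XS v0 (cat (rev as) en) b"
        using key(1)[OF w CIR(1) CIR(2) CIR(3) CIR(4) a(2) as, of \<pi>] by (simp add: XS_def)
    qed
    have "val (Ip D) \<pi> Xn v en (instf S ts)" using \<open>valid D G (instf S ts)\<close> a unfolding valid_def by blast
    then have "XS (map (den v en 0) ts)" by (simp add: XS_def val_instf)
    then show "val (Ip D) \<pi> Xn v en (Atm p ts)" using Ip_Nu[OF w CIR(1)] ci po by auto
  qed
qed

definition \<pi>a :: "defn \<Rightarrow> pinterp" where
  "\<pi>a D = (\<lambda>(p, i). case D p of Some (Nu, _) \<Rightarrow> (\<lambda>_. False) | _ \<Rightarrow> (\<lambda>_. True))"

lemma adm_\<pi>a: "adm D (\<pi>a D)"
  unfolding adm_def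
proof (intro allI conjI impI)
  fix p i
  show "cinv (\<pi>a D (p, i))" by (auto simp: \<pi>a_def cinv_def split: option.splits kind.splits)
next
  fix p i b assume "D p = Some (Mu, b)"
  then show "pre (Ip D) p b (\<pi>a D (p, i))" by (simp add: \<pi>a_def pre_def)
next
  fix p i b assume "D p = Some (Nu, b)"
  then show "post (Ip D) p b (\<pi>a D (p, i))" by (simp add: \<pi>a_def post_def)
qed

lemma wfv_v0: "wfv v0"
  by (auto simp: wfv_def v0_def intro: hastype.intros)

theorem mainTheorem2:
  assumes "wf_defn D"
    and "wff None [] C"
  shows "\<not> (deriv D {#} C \<and> deriv D {#} (Imp C Bot))"
proof
  assume "deriv D {#} C \<and> deriv D {#} (Imp C Bot)"
  then have "valid D {#} C" "valid D {#} (Imp C Bot)" using soundness[OF assms(1)] by auto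
  then show False using adm_\<pi>a[of D] wfv_v0 unfolding valid_def by auto
qed

end
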